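(* Let $n\ge4$. The set $\{g_1,\dots,g_{n-3},h_1\}$ yields a duality on the algebra $\mathbf C_n$; that is, for the alter ego $(C_n;g_1,\dots,g_{n-3},h_1,\mathscr T)$, the evaluation map $e_{\mathbf C_n}\colon\mathbf C_n\to ED(\mathbf C_n)$ is an isomorphism.
   Context: $\mathbf C_n$ is the Heyting algebra whose universe is the chain $\{0<1<\dots<n-1\}$, with lattice operations min and max, $\bot=0$, $\top=n-1$, and $a\to b=\top$ if $a\le b$, $a\to b=b$ if $b<a$. $\mathcal G_n$ is the class of algebras isomorphic to subalgebras of direct powers of $\mathbf C_n$; $\mathcal G_n(\mathbf A,\mathbf C_n)$ is the set of Heyting homomorphisms $\mathbf A\to\mathbf C_n$. $h_1$ is the endomorphism of $\mathbf C_n$ with $h_1(k)=k+1$ for $1\le k<n-1$ and $h_1(k)=k$ for $k\in\{0,n-1\}$. For $1\le i\le n-3$, $g_i$ is the partial endomorphism with domain $C_n\setminus\{i\}$ given by $g_i(i+1)=i$ and $g_i(k)=k$ for $k\notin\{i,i+1\}$. Natural duality set-up: an alter ego here is $(C_n;P,\mathscr T)$ with $P$ a set of total and partial endomorphisms of $\mathbf C_n$ (homomorphisms from subalgebras of $\mathbf C_n$ into $\mathbf C_n$) and $\mathscr T$ discrete. Powers carry the product topology and pointwise-lifted operations: for $p\in P$, $p^S(x)=p\circ x$, defined iff $x(s)\in\operatorname{dom}p$ for all $s\in S$. A substructure is a subset closed under all these (partial) operations wherever defined. $\mathcal X$ is the class of topological structures isomorphic to closed substructures of powers (empty one included); morphisms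 are continuous maps $\varphi$ preserving total operations and, for partial $p$, such that $x\in\operatorname{dom}p^{\mathbf X}$ implies $\varphi(x)\in\operatorname{dom}p^{\mathbf Y}$ and $\varphi(p^{\mathbf X}(x))=p^{\mathbf Y}(\varphi(x))$. For $\mathbf A\in\mathcal G_n$, $D(\mathbf A)=\mathcal G_n(\mathbf A,\mathbf C_n)$ viewed as a closed substructure of the power with exponent $A$; for $\mathbf X\in\mathcal X$, $E(\mathbf X)$ is the set of $\mathcal X$-morphisms from $\mathbf X$ to the alter ego, a subalgebra of $\mathbf C_n^X$. The evaluation $e_{\mathbf A}\colon\mathbf A\to ED(\mathbf A)$, $e_{\mathbf A}(a)(x)=x(a)$, is always an embedding; $P$ yields a duality on $\mathbf A$ if $e_{\mathbf A}$ is surjective. *)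

theory Defs
  imports "HOL-Library.FuncSet"
begin

text \<open>The chain C_n with universe {0..<n} (natural numbers), bottom 0, top n-1.\<close>

definition cn_top :: "nat \<Rightarrow> nat" where
  "cn_top n = n - 1"

definition cn_imp :: "nat \<Rightarrow> nat \<Rightarrow> nat \<Rightarrow> nat" where
  "cn_imp n a b = (if a \<le> b then cn_top n else b)"

definition heyting_hom :: "nat \<Rightarrow> (nat \<Rightarrow> nat) \<Rightarrow> bool" where
  "heyting_hom n f \<longleftrightarrow>
     (\<forall>a\<in>{0..<n}. f a \<in> {0..<n}) \<and>
     (\<forall>a\<in>{0..<n}. \<forall>b\<in>{0..<n}. f (min a b) = min (f a) (f b)) \<and>
     (\<forall>a\<in>{0..<n}. \<forall>b\<in>{0..<n}. f (max a b) = max (f a) (f b)) \<and>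
     (\<forall>a\<in>{0..<n}. \<forall>b\<in>{0..<n}. f (cn_imp n a b) = cn_imp n (f a) (f b)) \<and>
     f 0 = 0 \<and> f (cn_top n) = cn_top n"

text \<open>The endomorphism h_1 and the partial endomorphisms g_i (domain {0..<n} - {i}).\<close>

definition h1 :: "nat \<Rightarrow> nat \<Rightarrow> nat" where
  "h1 n k = (if 1 \<le> k \<and> k < n - 1 then k + 1 else k)"

definition g :: "nat \<Rightarrow> nat \<Rightarrow> nat" where
  "g i k = (if k = i + 1 then i else k)"

definition D_Cn :: "nat \<Rightarrow> (nat \<Rightarrow> nat) set" where
  "D_Cn n = {x \<in> {0..<n} \<rightarrow>\<^sub>E {0..<n}. heyting_hom n x}"

definition lift :: "nat \<Rightarrow> (nat \<Rightarrow> nat) \<Rightarrow> (nat \<Rightarrow> nat) \<Rightarrow> (nat \<Rightarrow> nat)" where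
  "lift n p x = restrict (p \<circ> x) {0..<n}"

text \<open>D(C_n) is finite, so its product topology is discrete and continuity is automatic.\<close>

definition E_D_Cn :: "nat \<Rightarrow> ((nat \<Rightarrow> nat) \<Rightarrow> nat) set" where
  "E_D_Cn n = {\<phi> \<in> D_Cn n \<rightarrow>\<^sub>E {0..<n}.
      (\<forall>x\<in>D_Cn n. \<phi> (lift n (h1 n) x) = h1 n (\<phi> x)) \<and>
      (\<forall>i. 1 \<le> i \<and> i \<le> n - 3 \<longrightarrow>
         (\<forall>x\<in>D_Cn n. (\<forall>a\<in>{0..<n}. x a \<noteq> i) \<longrightarrow>
            \<phi> x \<noteq> i \<and> \<phi> (lift n (g i) x) = g i (\<phi> x)))}"

definition eval_map :: "nat \<Rightarrow> nat \<Rightarrow> ((nat \<Rightarrow> nat) \<Rightarrow> nat)" where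
  "eval_map n a = restrict (\<lambda>x. x a) (D_Cn n)"

end

theory Submission
  imports Defs
begin

definition good :: "nat \<Rightarrow> (nat \<Rightarrow> nat) \<Rightarrow> bool" where
  "good n x \<longleftrightarrow> x \<in> {0..<n} \<rightarrow>\<^sub>E {0..<n} \<and> x 0 = 0 \<and>
     (\<forall>k. Suc k < n \<longrightarrow> (x k = n - 1 \<longrightarrow> x (Suc k) = n - 1) \<and> (x k < n - 1 \<longrightarrow> x k < x (Suc k)))"

lemma good_lt: "good n x \<Longrightarrow> a < n \<Longrightarrow> x a < n"
  unfolding good_def by auto

lemma good_ext: "good n x \<Longrightarrow> a \<ge> n \<Longrightarrow> x a = undefined"
  unfolding good_def PiE_def extensional_def by auto

lemma good_step: "good n x \<Longrightarrow> Suc k < n \<Longrightarrow> x k \<le> x (Suc k)"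
proof -
  assume g: "good n x" and k: "Suc k < n"
  have "x k < n" using good_lt[OF g] k by auto
  have b: "x k = n - 1 \<longrightarrow> x (Suc k) = n - 1" "x k < n - 1 \<longrightarrow> x k < x (Suc k)"
    using g k unfolding good_def by auto
  show ?thesis using b \<open>x k < n\<close> by (cases "x k = n - 1") auto
qed

lemma good_mono: "good n x \<Longrightarrow> j \<le> l \<Longrightarrow> l < n \<Longrightarrow> x j \<le> x l"
proof (induction l)
  case 0 then show ?case by simp
next
  case (Suc l)
  show ?case
  proof (cases "j = Suc l")
    case True then show ?thesis by simp
  next
    case False
    then have "x j \<le> x l" using Suc by auto
    also have "\<dots> \<le> x (Suc l)" using good_step Suc by blast
    finally show ?thesis .
  qed
qed

lemma good_strict: "good n x \<Longrightarrow> j < l \<Longrightarrow> l < n \<Longrightarrow> x j < n - 1 \<Longrightarrow> x j < x l"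
proof (induction l)
  case 0 then show ?case by simp
next
  case (Suc l)
  show ?case
  proof (cases "j = l")
    case True then show ?thesis using Suc.prems unfolding good_def by auto
  next
    case False
    then have "x j < x l" using Suc by auto
    also have "\<dots> \<le> x (Suc l)" using good_step Suc by blast
    finally show ?thesis .
  qed
qed

lemma good_ge: "good n x \<Longrightarrow> k < n \<Longrightarrow> k \<le> x k"
proof (induction k)
  case 0 then show ?case by simp
next
  case (Suc k)
  then have ih: "k \<le> x k" by auto
  have "x k < n" using good_lt Suc by auto
  have b: "x k = n - 1 \<longrightarrow> x (Suc k) = n - 1" "x k < n - 1 \<longrightarrow> x k < x (Suc k)"
    using Suc.prems unfolding good_def by auto
  show ?case using b \<open>x k < n\<close> ih Suc.prems by (cases "x k = n - 1") auto
qed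

lemma good_top: "good n x \<Longrightarrow> n \<ge> 1 \<Longrightarrow> x (n - 1) = n - 1"
  using good_ge[of n x "n - 1"] good_lt[of n x "n - 1"] by auto

lemma good_hom: assumes g: "good n x" and n: "n \<ge> 1" shows "x \<in> D_Cn n"
proof -
  have mono: "\<And>a b. a \<le> b \<Longrightarrow> b < n \<Longrightarrow> x a \<le> x b" using good_mono[OF g] by blast
  have lt: "\<And>a. a < n \<Longrightarrow> x a < n" using good_lt[OF g] .
  have mn: "x (min a b) = min (x a) (x b)" if "a < n" "b < n" for a b
    using mono[of a b] mono[of b a] that by (cases "a \<le> b") (auto simp: min_def)
  have mx: "x (max a b) = max (x a) (x b)" if "a < n" "b < n" for a b
    using mono[of a b] mono[of b a] that by (cases "a \<le> b") (auto simp: max_def)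
  have im: "x (cn_imp n a b) = cn_imp n (x a) (x b)" if a: "a < n" and b: "b < n" for a b
  proof (cases "a \<le> b")
    case True
    then show ?thesis using mono[OF True b] good_top[OF g n] by (simp add: cn_imp_def cn_top_def)
  next
    case False
    show ?thesis
    proof (cases "x b = n - 1")
      case True
      have "x b \<le> x a" using mono[of b a] False a by auto
      then have "x a = n - 1" using True lt[OF a] by auto
      then show ?thesis using True False by (simp add: cn_imp_def cn_top_def)
    next
      case nt: False
      then have "x b < n - 1" using lt[OF b] by auto
      then have "x b < x a" using good_strict[OF g, of b a] False a by auto
      then show ?thesis using False by (simp add: cn_imp_def cn_top_def)
    qed
  qed
  show ?thesis unfolding D_Cn_def heyting_hom_def
    using g mn mx im good_top[OF g n] unfolding good_def cn_top_def by auto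
qed

lemma hom_good: assumes x: "x \<in> D_Cn n" shows "good n x"
proof -
  have pi: "x \<in> {0..<n} \<rightarrow>\<^sub>E {0..<n}" and h: "heyting_hom n x" using x unfolding D_Cn_def by auto
  have lt: "\<And>a. a < n \<Longrightarrow> x a < n" using pi by auto
  have step: "(x k = n - 1 \<longrightarrow> x (Suc k) = n - 1) \<and> (x k < n - 1 \<longrightarrow> x k < x (Suc k))"
    if k: "Suc k < n" for k
  proof -
    have m: "\<forall>a\<in>{0..<n}. \<forall>b\<in>{0..<n}. x (min a b) = min (x a) (x b)" using h unfolding heyting_hom_def by blast
    have "x (min k (Suc k)) = min (x k) (x (Suc k))" using m[rule_format, of k "Suc k"] k by simp
    then have le: "x k \<le> x (Suc k)" by (simp add: min_def split: if_splits)
    have m2: "\<forall>a\<in>{0..<n}. \<forall>b\<in>{0..<n}. x (cn_imp n a b) = cn_imp n (x a) (x b)" using h unfolding heyting_hom_def by blast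
    have "x (cn_imp n (Suc k) k) = cn_imp n (x (Suc k)) (x k)" using m2[rule_format, of "Suc k" k] k by (simp add: cn_imp_def)
    then have e: "x k = (if x (Suc k) \<le> x k then n - 1 else x k)" by (auto simp: cn_imp_def cn_top_def split: if_splits)
    show ?thesis using le e lt[OF k] by (auto split: if_splits)
  qed
  show ?thesis unfolding good_def using pi h step unfolding heyting_hom_def by auto
qed

lemma D_good: "n \<ge> 1 \<Longrightarrow> x \<in> D_Cn n \<longleftrightarrow> good n x"
  using good_hom hom_good by blast

lemma lift_app: "a < n \<Longrightarrow> lift n p x a = p (x a)"
  by (simp add: lift_def)

lemma lift_h1_good: assumes g: "good n x" and n: "n \<ge> 4" shows "good n (lift n (h1 n) x)"
proof -
  have lt: "\<And>a. a < n \<Longrightarrow> x a < n" using good_lt[OF g] .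
  have pi: "lift n (h1 n) x \<in> {0..<n} \<rightarrow>\<^sub>E {0..<n}"
    using lt unfolding lift_def h1_def by auto
  have z: "lift n (h1 n) x 0 = 0" using g n by (simp add: lift_def h1_def good_def)
  have st: "(lift n (h1 n) x k = n - 1 \<longrightarrow> lift n (h1 n) x (Suc k) = n - 1) \<and>
      (lift n (h1 n) x k < n - 1 \<longrightarrow> lift n (h1 n) x k < lift n (h1 n) x (Suc k))"
    if k: "Suc k < n" for k
  proof -
    have a: "x k < n" "x (Suc k) < n" using lt k by auto
    have b: "x k = n - 1 \<longrightarrow> x (Suc k) = n - 1" "x k < n - 1 \<longrightarrow> x k < x (Suc k)"
      using g k unfolding good_def by auto
    show ?thesis using a b k by (auto simp: lift_def h1_def split: if_splits)
  qed
  show ?thesis unfolding good_def using pi z st by blast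
qed

lemma lift_g_good: assumes g: "good n x" and n: "n \<ge> 4" and i: "1 \<le> i" "i \<le> n - 3"
  and av: "\<forall>a<n. x a \<noteq> i" shows "good n (lift n (g i) x)"
proof -
  have lt: "\<And>a. a < n \<Longrightarrow> x a < n" using good_lt[OF g] .
  have pi: "lift n (g i) x \<in> {0..<n} \<rightarrow>\<^sub>E {0..<n}"
    using lt i n unfolding lift_def g_def by auto
  have z: "lift n (g i) x 0 = 0" using g n i by (simp add: lift_def g_def good_def)
  have st: "(lift n (g i) x k = n - 1 \<longrightarrow> lift n (g i) x (Suc k) = n - 1) \<and>
      (lift n (g i) x k < n - 1 \<longrightarrow> lift n (g i) x k < lift n (g i) x (Suc k))"
    if k: "Suc k < n" for k
  proof -
    have a: "x k < n" "x (Suc k) < n" "x k \<noteq> i" "x (Suc k) \<noteq> i" using lt k av by auto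
    have b: "x k = n - 1 \<longrightarrow> x (Suc k) = n - 1" "x k < n - 1 \<longrightarrow> x k < x (Suc k)"
      using g k unfolding good_def by auto
    show ?thesis using a b k i n by (auto simp: lift_def g_def split: if_splits)
  qed
  show ?thesis unfolding good_def using pi z st by blast
qed

inductive_set R :: "nat \<Rightarrow> (nat \<Rightarrow> nat) set" for n where
  base: "restrict (\<lambda>k. k) {0..<n} \<in> R n"
| hstep: "x \<in> R n \<Longrightarrow> lift n (h1 n) x \<in> R n"
| gstep: "x \<in> R n \<Longrightarrow> 1 \<le> i \<Longrightarrow> i \<le> n - 3 \<Longrightarrow> (\<forall>a<n. x a \<noteq> i) \<Longrightarrow> lift n (g i) x \<in> R n"

lemma id_good: "n \<ge> 1 \<Longrightarrow> good n (restrict (\<lambda>k. k) {0..<n})"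
  unfolding good_def by auto

lemma R_good: "x \<in> R n \<Longrightarrow> n \<ge> 4 \<Longrightarrow> good n x"
  by (induction rule: R.induct) (auto intro: id_good lift_h1_good lift_g_good)

definition F :: "nat \<Rightarrow> nat \<Rightarrow> nat \<Rightarrow> nat" where
  "F n c = restrict (\<lambda>k. if k = 0 then 0 else min (c + k - 1) (n - 1)) {0..<n}"

lemma F_R: "n \<ge> 4 \<Longrightarrow> F n (Suc c) \<in> R n"
proof (induction c)
  case 0
  have "F n (Suc 0) = restrict (\<lambda>k. k) {0..<n}" unfolding F_def by (rule ext) auto
  then show ?case using R.base[of n] by (simp only:)
next
  case (Suc c)
  have "F n (Suc (Suc c)) = lift n (h1 n) (F n (Suc c))"
    unfolding F_def lift_def h1_def by (rule ext) auto
  then show ?case using R.hstep Suc by simp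
qed

lemma good_R: assumes n: "n \<ge> 4" shows "good n x \<Longrightarrow> x \<in> R n"
proof (induction "n * n - sum x {0..<n}" arbitrary: x rule: less_induct)
  case less
  note g = less.prems
  have lt: "\<And>a. a < n \<Longrightarrow> x a < n" using good_lt[OF g] .
  show ?case
  proof (cases "\<exists>k. 1 \<le> k \<and> Suc k < n \<and> x k < n - 1 \<and> x k + 1 < x (Suc k)")
    case True
    then obtain k where k: "1 \<le> k" "Suc k < n" "x k < n - 1" "x k + 1 < x (Suc k)" by blast
    define y where "y = x(k := x k + 1)"
    have xsk: "x (Suc k) < n" using lt k by auto
    have gy: "good n y"
    proof -
      have pi: "y \<in> {0..<n} \<rightarrow>\<^sub>E {0..<n}" using g k xsk unfolding y_def good_def PiE_def extensional_def by auto
      have z: "y 0 = 0" using g k unfolding y_def good_def by auto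
      have st: "(y j = n - 1 \<longrightarrow> y (Suc j) = n - 1) \<and> (y j < n - 1 \<longrightarrow> y j < y (Suc j))"
        if j: "Suc j < n" for j
      proof -
        have b: "x j = n - 1 \<longrightarrow> x (Suc j) = n - 1" "x j < n - 1 \<longrightarrow> x j < x (Suc j)"
          using g j unfolding good_def by auto
        show ?thesis
        proof (cases "j = k")
          case True then show ?thesis using k xsk unfolding y_def by auto
        next
          case False
          show ?thesis
          proof (cases "Suc j = k")
            case True
            have "x j \<le> x k" using good_mono[OF g, of j k] True k by auto
            then show ?thesis using True k b unfolding y_def by auto
          next
            case False
            then show ?thesis using \<open>j \<noteq> k\<close> b unfolding y_def by auto
          qed
        qed
      qed
      show ?thesis unfolding good_def using pi z st by blast
    qed
    have sy: "sum y {0..<n} = sum x {0..<n} + 1"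
    proof -
      have kin: "k \<in> {0..<n}" using k by auto
      have "sum y {0..<n} = y k + sum y ({0..<n} - {k})" using sum.remove[OF _ kin] by simp
      also have "sum y ({0..<n} - {k}) = sum x ({0..<n} - {k})" unfolding y_def by (rule sum.cong) auto
      also have "sum x {0..<n} = x k + sum x ({0..<n} - {k})" using sum.remove[OF _ kin] by simp
      ultimately show ?thesis unfolding y_def by simp
    qed
    have bnd: "sum y {0..<n} \<le> n * n"
    proof -
      have "sum y {0..<n} \<le> sum (\<lambda>_. n) {0..<n}"
        by (rule sum_mono) (use good_lt[OF gy] in \<open>auto intro: less_imp_le\<close>)
      then show ?thesis by simp
    qed
    have yR: "y \<in> R n" using less.hyps[OF _ gy] sy bnd by simp
    have i1: "1 \<le> x k" using good_ge[OF g, of k] k by auto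
    have i3: "x k \<le> n - 3" using k xsk by auto
    have av: "\<forall>a<n. y a \<noteq> x k"
    proof (intro allI impI)
      fix a assume a: "a < n"
      show "y a \<noteq> x k"
      proof (cases "a = k")
        case True then show ?thesis unfolding y_def by simp
      next
        case False
        show ?thesis
        proof (cases "a < k")
          case True
          have "x a \<le> x k" using good_mono[OF g, of a k] True k by auto
          then have "x a < n - 1" using k by auto
          then have "x a < x k" using good_strict[OF g, of a k] True k by auto
          then show ?thesis using False unfolding y_def by auto
        next
          case nl: False
          then have "x k < x a" using good_strict[OF g, of k a] False a k by auto
          then show ?thesis using False unfolding y_def by auto
        qed
      qed
    qed
    have ex: "lift n (g (x k)) y = x"
    proof (rule ext)
      fix a
      show "lift n (g (x k)) y a = x a"
      proof (cases "a < n")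
        case False then show ?thesis using good_ext[OF g] by (simp add: lift_def)
      next
        case a: True
        show ?thesis
        proof (cases "a = k")
          case True then show ?thesis using a by (simp add: lift_def y_def g_def)
        next
          case False
          have "x a \<noteq> x k + 1"
          proof (cases "a < k")
            case True
            have "x a \<le> x k" using good_mono[OF g, of a k] True k by auto
            then show ?thesis by auto
          next
            case nl: False
            then have "x (Suc k) \<le> x a" using good_mono[OF g, of "Suc k" a] False a by auto
            then show ?thesis using k by auto
          qed
          then show ?thesis using False a by (simp add: lift_def y_def g_def)
        qed
      qed
    qed
    show ?thesis using R.gstep[OF yR i1 i3 av] ex by simp
  next
    case False
    then have nA: "\<And>k. 1 \<le> k \<Longrightarrow> Suc k < n \<Longrightarrow> x k < n - 1 \<Longrightarrow> x (Suc k) = x k + 1"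
    proof -
      fix k assume k: "1 \<le> k" "Suc k < n" "x k < n - 1"
      have "x k < x (Suc k)" using g k unfolding good_def by auto
      moreover have "\<not> (x k + 1 < x (Suc k))" using False k by blast
      ultimately show "x (Suc k) = x k + 1" by simp
    qed
    define c where "c = x 1"
    have c1: "1 \<le> c" using good_ge[OF g, of 1] n unfolding c_def by auto
    have fk: "1 \<le> k \<longrightarrow> k < n \<longrightarrow> x k = min (c + k - 1) (n - 1)" for k
    proof (induction k)
      case 0 then show ?case by simp
    next
      case (Suc k)
      show ?case
      proof (cases "k = 0")
        case True then show ?thesis using lt[of 1] n unfolding c_def by auto
      next
        case False
        show ?thesis
        proof (intro impI)
          assume sk: "Suc k < n"
          then have ih: "x k = min (c + k - 1) (n - 1)" using Suc False by auto
          show "x (Suc k) = min (c + Suc k - 1) (n - 1)"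
          proof (cases "x k < n - 1")
            case True
            then show ?thesis using nA[of k] False sk ih by auto
          next
            case nt: False
            then have "x k = n - 1" using lt[of k] sk by auto
            then have "x (Suc k) = n - 1" using g sk unfolding good_def by auto
            then show ?thesis using ih nt by auto
          qed
        qed
      qed
    qed
    have "x = F n c"
    proof (rule ext)
      fix a
      show "x a = F n c a"
      proof (cases "a < n")
        case False then show ?thesis using good_ext[OF g] by (simp add: F_def)
      next
        case True then show ?thesis using fk[of a] g unfolding F_def good_def by auto
      qed
    qed
    moreover obtain c' where "c = Suc c'" using c1 by (cases c) auto
    ultimately show ?thesis using F_R[OF n] by simp
  qed
qed

theorem proposition3p2:
  fixes n :: nat
  assumes "n \<ge> 4"
  shows "bij_betw (eval_map n) {0..<n} (E_D_Cn n)"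
proof -
  have n1: "n \<ge> 1" using assms by simp
  define I where "I = restrict (\<lambda>k. k) {0..<n}"
  have ID: "I \<in> D_Cn n" using D_good[OF n1] id_good[OF n1] unfolding I_def by blast
  have inj: "inj_on (eval_map n) {0..<n}"
  proof (rule inj_onI)
    fix a b assume a: "a \<in> {0..<n}" and b: "b \<in> {0..<n}" and e: "eval_map n a = eval_map n b"
    have "eval_map n a I = eval_map n b I" using e by simp
    then show "a = b" using ID a b unfolding eval_map_def I_def by simp
  qed
  have sub: "eval_map n a \<in> E_D_Cn n" if a: "a < n" for a
  proof -
    have pi: "eval_map n a \<in> D_Cn n \<rightarrow>\<^sub>E {0..<n}"
      unfolding eval_map_def using a by (auto simp: D_Cn_def)
    have h: "eval_map n a (lift n (h1 n) x) = h1 n (eval_map n a x)" if x: "x \<in> D_Cn n" for x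
    proof -
      have "lift n (h1 n) x \<in> D_Cn n"
        using lift_h1_good[OF _ assms] D_good[OF n1] x by blast
      then show ?thesis using x a by (simp add: eval_map_def lift_def)
    qed
    have gg: "eval_map n a x \<noteq> i \<and> eval_map n a (lift n (g i) x) = g i (eval_map n a x)"
      if i: "1 \<le> i" "i \<le> n - 3" and x: "x \<in> D_Cn n" and av: "\<forall>b\<in>{0..<n}. x b \<noteq> i" for i x
    proof -
      have "lift n (g i) x \<in> D_Cn n"
        using lift_g_good[OF _ assms i] D_good[OF n1] x av by auto
      then show ?thesis using x a av by (simp add: eval_map_def lift_def)
    qed
    show ?thesis unfolding E_D_Cn_def using pi h gg by blast
  qed
  have sur: "\<phi> \<in> eval_map n ` {0..<n}" if p: "\<phi> \<in> E_D_Cn n" for \<phi>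
  proof -
    define a where "a = \<phi> I"
    have pi: "\<phi> \<in> D_Cn n \<rightarrow>\<^sub>E {0..<n}"
      and ph: "\<And>x. x \<in> D_Cn n \<Longrightarrow> \<phi> (lift n (h1 n) x) = h1 n (\<phi> x)"
      and pg: "\<And>i x. 1 \<le> i \<Longrightarrow> i \<le> n - 3 \<Longrightarrow> x \<in> D_Cn n \<Longrightarrow> (\<forall>b\<in>{0..<n}. x b \<noteq> i) \<Longrightarrow>
            \<phi> (lift n (g i) x) = g i (\<phi> x)"
      using p unfolding E_D_Cn_def by auto
    have a: "a < n" using pi ID unfolding a_def by auto
    have agree: "\<phi> x = x a" if "x \<in> R n" for x
      using that
    proof (induction rule: R.induct)
      case base
      have "I a = a" using a by (simp add: I_def)
      then show ?case unfolding I_def[symmetric] a_def by simp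
    next
      case (hstep x)
      have "x \<in> D_Cn n" using R_good[OF hstep.hyps assms] D_good[OF n1] by blast
      then show ?case using ph[of x] hstep.IH a by (simp add: lift_app)
    next
      case (gstep x i)
      have "x \<in> D_Cn n" using R_good[OF gstep.hyps(1) assms] D_good[OF n1] by blast
      then show ?case using pg[of i x] gstep a by (simp add: lift_app)
    qed
    have "\<phi> = eval_map n a"
    proof (rule ext)
      fix x
      show "\<phi> x = eval_map n a x"
      proof (cases "x \<in> D_Cn n")
        case True
        then have "x \<in> R n" using good_R[OF assms] D_good[OF n1] by blast
        then show ?thesis using agree True by (simp add: eval_map_def)
      next
        case False then show ?thesis using pi by (simp add: eval_map_def PiE_def extensional_def)
      qed
    qed
    then show ?thesis using a by auto
  qed
  show ?thesis unfolding bij_betw_def using inj sub sur by auto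
qed

end
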